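(* Let $C$ and $D$ be $R$-linear codes of length $n$. Then \[ \mathrm{CJ}^{\mathrm{av}}_{C,D}(x_{ij}\ \text{with}\ i,j\in K)=\sum_{\eta}A_r^C\,A_s^D\,\frac{\prod_{i=0}^{|R|-1}\binom{s_i}{\eta_{\omega_0\omega_i},\dots,\eta_{\omega_{|R|-1}\omega_i}}}{\binom{n}{r_0,\dots,r_{|R|-1}}}\prod_{i,j=0}^{|R|-1}x_{ij}^{\eta_{\omega_i\omega_j}}. \] The sum runs over all bi-compositions $\eta=(\eta_{\alpha\beta})_{(\alpha,\beta)\in R^2}$ of $n$, i.e. non-negative integers with $\sum_{\alpha,\beta}\eta_{\alpha\beta}=n$. For each $\eta$, the compositions $r,s$ of $n$ are determined by \[ r_i=\sum_{\beta\in R}\eta_{\omega_i\beta},\qquad s_i=\sum_{\alpha\in R}\eta_{\alpha\omega_i}\qquad (i\in K). \]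
   Context: $R$ denotes either the finite field $\mathbb F_q$ or the ring $\mathbb Z_k$ ($k\ge2$). Its elements are listed in a fixed order $0=\omega_0,\dots,\omega_{|R|-1}$, and $K=\{0,\dots,|R|-1\}$. An $R$-linear code of length $n$ is an $\mathbb F_q$-subspace of $\mathbb F_q^n$, respectively an additive subgroup of $\mathbb Z_k^n$. A composition of $n$ is a vector $s=(s_0,\dots,s_{|R|-1})$ of non-negative integers summing to $n$. For $u\in R^n$, $\mathrm{comp}(u)=(s_0(u),\dots,s_{|R|-1}(u))$, where $s_i(u)$ is the number of coordinates of $u$ equal to $\omega_i$. $A_s^C$ denotes the number of $u\in C$ with $\mathrm{comp}(u)=s$. For $u,v\in R^n$, $\eta_{\alpha\beta}(u,v)=\#\{i:(u_i,v_i)=(\alpha,\beta)\}$. The complete joint weight enumerator is \[ \mathrm{CJE}_{C,D}(x_{ij})=\sum_{u\in C,v\in D}\prod_{i,j}x_{ij}^{\eta_{\omega_i\omega_j}(u,v)}. \] For $\sigma\in S_n$, set $u^\sigma=(u_{\sigma(1)},\dots,u_{\sigma(n)})$ and $C^\sigma=\{u^\sigma:u\in C\}$. The average complete joint weight enumerator is \[ \mathrm{CJ}^{\mathrm{av}}_{C,D}(x_{ij})=\frac1{n!}\sum_{\sigma\in S_n}\mathrm{CJE}_{C^\sigma,D}(x_{ij}). \] The multinomial coefficient is $\binom{a}{b_0,\dots,b_m}=a!/(b_0!\cdots b_m!)$. *)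

theory Defs
  imports Main "HOL-Combinatorics.Permutations" Complex_Main
begin

text \<open>Alphabet: a finite commutative ring 'a which is either a finite field F_q
  (every nonzero element invertible) or a ring Z_k (every element is a multiple of 1;
  k \<ge> 2 holds since 0 \<noteq> 1).
  The fixed ordering of the alphabet is omega, a bijection {0..<card (UNIV :: 'a set)} \<rightarrow> UNIV
  with omega 0 = 0.  Indices i in K = {0..<card (UNIV :: 'a set)} stand for omega i.\<close>

definition is_Fq_or_Zk :: "'a::{finite,comm_ring_1} itself \<Rightarrow> bool" where
  "is_Fq_or_Zk _ \<longleftrightarrow>
     (\<forall>a::'a. a \<noteq> 0 \<longrightarrow> (\<exists>b. a * b = 1)) \<or> (\<forall>a::'a. \<exists>m::nat. a = of_nat m)"

definition alphabet_order :: "(nat \<Rightarrow> 'a::{finite,zero}) \<Rightarrow> bool" where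
  "alphabet_order (\<omega> :: nat \<Rightarrow> 'a) \<longleftrightarrow> bij_betw \<omega> {0..<card (UNIV :: 'a set)} (UNIV :: 'a set) \<and> \<omega> 0 = 0"

text \<open>R-linear code of length n: an R-submodule of R^n (for F_q a subspace; for Z_k this is
  exactly an additive subgroup).\<close>
definition linear_code :: "nat \<Rightarrow> 'a::comm_ring_1 list set \<Rightarrow> bool" where
  "linear_code n C \<longleftrightarrow> C \<subseteq> {u. length u = n} \<and> replicate n 0 \<in> C \<and>
     (\<forall>u\<in>C. \<forall>v\<in>C. map2 (+) u v \<in> C) \<and> (\<forall>c. \<forall>u\<in>C. map ((*) c) u \<in> C)"

definition comp :: "(nat \<Rightarrow> 'a::finite) \<Rightarrow> 'a list \<Rightarrow> nat \<Rightarrow> nat" where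
  "comp (\<omega> :: nat \<Rightarrow> 'a) u i = (if i < card (UNIV :: 'a set) then card {p. p < length u \<and> u ! p = \<omega> i} else 0)"

definition A_count :: "(nat \<Rightarrow> 'a::finite) \<Rightarrow> 'a list set \<Rightarrow> (nat \<Rightarrow> nat) \<Rightarrow> nat" where
  "A_count \<omega> C s = card {u \<in> C. comp \<omega> u = s}"

definition eta :: "(nat \<Rightarrow> 'a) \<Rightarrow> 'a list \<Rightarrow> 'a list \<Rightarrow> nat \<Rightarrow> nat \<Rightarrow> nat" where
  "eta \<omega> u v i j = card {p. p < length u \<and> u ! p = \<omega> i \<and> v ! p = \<omega> j}"

definition CJE :: "(nat \<Rightarrow> 'a::finite) \<Rightarrow> 'a list set \<Rightarrow> 'a list set \<Rightarrow> (nat \<Rightarrow> nat \<Rightarrow> real) \<Rightarrow> real" where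
  "CJE (\<omega> :: nat \<Rightarrow> 'a) C D x = (\<Sum>u\<in>C. \<Sum>v\<in>D. \<Prod>i<card (UNIV :: 'a set). \<Prod>j<card (UNIV :: 'a set). x i j ^ eta \<omega> u v i j)"

text \<open>u^sigma = (u_{sigma(1)},...,u_{sigma(n)}), 0-indexed.\<close>
definition perm_word :: "(nat \<Rightarrow> nat) \<Rightarrow> 'a list \<Rightarrow> 'a list" where
  "perm_word \<sigma> u = map (\<lambda>i. u ! \<sigma> i) [0..<length u]"

definition CJ_av :: "(nat \<Rightarrow> 'a::finite) \<Rightarrow> nat \<Rightarrow> 'a list set \<Rightarrow> 'a list set \<Rightarrow> (nat \<Rightarrow> nat \<Rightarrow> real) \<Rightarrow> real" where
  "CJ_av \<omega> n C D x = (1 / fact n) *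
     (\<Sum>\<sigma>\<in>{\<sigma>. \<sigma> permutes {0..<n}}. CJE \<omega> (perm_word \<sigma> ` C) D x)"

text \<open>Bi-compositions of n over K x K (eta i j stands for eta_{omega_i omega_j}).\<close>
definition bicomps :: "nat \<Rightarrow> nat \<Rightarrow> (nat \<Rightarrow> nat \<Rightarrow> nat) set" where
  "bicomps m n = {\<eta>. (\<forall>i j. (m \<le> i \<or> m \<le> j) \<longrightarrow> \<eta> i j = 0) \<and> (\<Sum>i<m. \<Sum>j<m. \<eta> i j) = n}"

definition multinom :: "nat \<Rightarrow> nat \<Rightarrow> (nat \<Rightarrow> nat) \<Rightarrow> real" where
  "multinom a m b = fact a / (\<Prod>i<m. fact (b i))"

end

theory Submission
  imports Defs "HOL-Library.Multiset" "HOL-Library.Cardinality"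
begin


lemma multinom_dec:
  fixes b :: "nat \<Rightarrow> nat"
  assumes "i0 < m" "b i0 > 0"
  shows "multinom d m (\<lambda>i. if i = i0 then b i - 1 else b i) =
         fact d * real (b i0) / (\<Prod>i<m. fact (b i))"
proof -
  let ?R = "(\<Prod>i\<in>{..<m}-{i0}. fact (b i)) :: real"
  have i0: "i0 \<in> {..<m}" using assms by simp
  have p1: "(\<Prod>i<m. fact (if i = i0 then b i - 1 else b i)) = fact (b i0 - 1) * ?R"
    by (subst prod.remove[OF _ i0]) (auto intro!: prod.cong)
  have p2: "(\<Prod>i<m. fact (b i)) = (fact (b i0) :: real) * ?R"
    by (subst prod.remove[OF _ i0]) auto
  have f: "(fact (b i0) :: real) = real (b i0) * fact (b i0 - 1)"
    using assms(2) fact_reduce by blast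
  have "?R \<noteq> 0" by (simp add: prod_zero_iff)
  thus ?thesis using assms(2) unfolding multinom_def p1 p2 f by (simp add: field_simps)
qed

lemma multinom_sum:
  fixes b :: "nat \<Rightarrow> nat"
  assumes "c = (\<Sum>i<m. b i)" "c > 0"
  shows "(\<Sum>i0<m. if b i0 > 0 then multinom (c - 1) m (\<lambda>i. if i = i0 then b i - 1 else b i) else 0)
     = multinom c m b"
proof -
  let ?P = "(\<Prod>i<m. fact (b i)) :: real"
  have "(\<Sum>i0<m. if b i0 > 0 then multinom (c - 1) m (\<lambda>i. if i = i0 then b i - 1 else b i) else 0)
     = (\<Sum>i0<m. fact (c - 1) * real (b i0) / ?P)"
    by (intro sum.cong refl) (auto simp: multinom_dec)
  also have "\<dots> = fact (c - 1) * real c / ?P"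
    by (simp add: sum_divide_distrib[symmetric] sum_distrib_left[symmetric] assms(1))
  also have "\<dots> = multinom c m b"
    using fact_reduce[OF assms(2), where 'a=real] by (simp add: multinom_def mult.commute)
  finally show ?thesis .
qed

definition Sset :: "(nat \<Rightarrow> 'a::finite) \<Rightarrow> 'a list \<Rightarrow> (nat \<Rightarrow> nat \<Rightarrow> nat) \<Rightarrow> 'a list set" where
  "Sset \<omega> v \<eta> = {w. length w = length v \<and> (\<forall>i<CARD('a). \<forall>j<CARD('a). eta \<omega> w v i j = \<eta> i j)}"

lemma finite_Sset: "finite (Sset \<omega> v \<eta>)"
  by (rule finite_subset[OF _ finite_lists_length_eq[OF finite_class.finite_UNIV, of "length v"]]) (auto simp: Sset_def)

context
  fixes \<omega> :: "nat \<Rightarrow> 'a::{finite,zero}"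
  assumes ao: "alphabet_order \<omega>"
begin



lemma bij: "bij_betw \<omega> {0..<CARD('a)} UNIV" using ao unfolding alphabet_order_def by blast
lemma om0: "\<omega> 0 = 0" using ao unfolding alphabet_order_def by blast
lemma Mpos: "0 < CARD('a)" by (simp add: finite_UNIV_card_ge_0)

lemma om_inj: "i < CARD('a) \<Longrightarrow> j < CARD('a) \<Longrightarrow> \<omega> i = \<omega> j \<longleftrightarrow> i = j"
  using bij_betw_imp_inj_on[OF bij] by (auto simp: inj_on_def)

lemma om_surj: "\<exists>i<CARD('a). \<omega> i = a"
  using bij_betw_imp_surj_on[OF bij] by (metis UNIV_I atLeastLessThan_iff imageE)

lemma delta_sum: "(\<Sum>i<CARD('a). if \<omega> i = a then g i else 0) = (g (THE i. i < CARD('a) \<and> \<omega> i = a) :: 'b::comm_monoid_add)"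
proof -
  obtain i0 where i0: "i0 < CARD('a)" "\<omega> i0 = a" using om_surj by blast
  have t: "(THE i. i < CARD('a) \<and> \<omega> i = a) = i0" using i0 om_inj by (intro the_equality) auto
  have "(\<Sum>i<CARD('a). if \<omega> i = a then g i else 0) = (\<Sum>i<CARD('a). if i = i0 then g i else 0)"
    using i0 om_inj by (intro sum.cong) auto
  also have "\<dots> = g i0" using i0 by simp
  finally show ?thesis using t by simp
qed

lemma delta_sum1: "(\<Sum>i<CARD('a). if \<omega> i = a then 1 else 0) = (1::nat)"
  using delta_sum[of a "\<lambda>_. 1::nat"] by simp

lemma card_sum_ind: "finite P \<Longrightarrow> card {p\<in>P. Q p} = (\<Sum>p\<in>P. if Q p then 1 else 0)"
  by (simp add: sum.If_cases Int_def)

lemma card_lt: "card {p. p < (k::nat) \<and> R p} = (\<Sum>p<k. if R p then 1 else 0)"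
  using card_sum_ind[of "{..<k}" R] by simp

lemma part: "(\<Sum>i<CARD('a). card {p. p < (k::nat) \<and> f p = \<omega> i \<and> Q p}) = card {p. p < k \<and> Q p}"
proof -
  have "(\<Sum>i<CARD('a). card {p. p < k \<and> f p = \<omega> i \<and> Q p}) =
        (\<Sum>i<CARD('a). \<Sum>p<k. if f p = \<omega> i \<and> Q p then 1 else 0)"
    by (intro sum.cong refl) (rule card_lt)
  also have "\<dots> = (\<Sum>p<k. \<Sum>i<CARD('a). if \<omega> i = f p then (if Q p then 1 else 0) else 0)"
    by (subst sum.swap) (auto intro!: sum.cong)
  also have "\<dots> = (\<Sum>p<k. if Q p then 1 else 0)"
    by (subst delta_sum) simp
  also have "\<dots> = card {p. p < k \<and> Q p}"
    by (rule card_lt[symmetric])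
  finally show ?thesis .
qed

lemma part2: "(\<Sum>i<CARD('a). card {p. p < (k::nat) \<and> Q p \<and> f p = \<omega> i}) = card {p. p < k \<and> Q p}"
  using part[of k f Q] by (simp add: conj_commute conj_left_commute)

lemma comp_count: "comp \<omega> w i = (if i < CARD('a) then count (mset w) (\<omega> i) else 0)"
  by (simp add: comp_def count_mset count_list_eq_length_filter length_filter_conv_card eq_commute)

lemma comp_eq_mset: "comp \<omega> w = comp \<omega> u \<longleftrightarrow> mset w = mset u"
proof
  assume h: "comp \<omega> w = comp \<omega> u"
  show "mset w = mset u"
  proof (rule multiset_eqI)
    fix a obtain i where "i < CARD('a)" "\<omega> i = a" using om_surj by blast
    thus "count (mset w) a = count (mset u) a" using fun_cong[OF h, of i] by (simp add: comp_count)
  qed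
qed (simp add: comp_count fun_eq_iff)

lemma sum_comp: "(\<Sum>i<CARD('a). comp \<omega> w i) = length w"
  using part[of "length w" "\<lambda>p. w ! p" "\<lambda>_. True"] by (simp add: comp_def)

lemma eta_sum: "eta \<omega> u v i j = (\<Sum>p<length u. if u ! p = \<omega> i \<and> v ! p = \<omega> j then 1 else 0)"
  unfolding eta_def by (rule card_lt)

lemma eta_Cons: "eta \<omega> (a#w) (b#v) i j = eta \<omega> w v i j + (if a = \<omega> i \<and> b = \<omega> j then 1 else 0)"
  unfolding eta_sum length_Cons sum.lessThan_Suc_shift by simp

lemma eta_Nil: "eta \<omega> [] v i j = 0"
  by (simp add: eta_def)

lemma comp_Cons: "comp \<omega> (b#v) j = comp \<omega> v j + (if j < CARD('a) \<and> b = \<omega> j then 1 else 0)"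
  unfolding comp_def card_lt length_Cons sum.lessThan_Suc_shift by simp

lemma L1:
  "(\<forall>j<CARD('a). (\<Sum>i<CARD('a). \<eta> i j) = comp \<omega> v j) \<Longrightarrow>
   real (card (Sset \<omega> v \<eta>)) = (\<Prod>j<CARD('a). multinom (comp \<omega> v j) CARD('a) (\<lambda>i. \<eta> i j))"
proof (induction v arbitrary: \<eta>)
  case Nil
  have z: "\<eta> i j = 0" if "i < CARD('a)" "j < CARD('a)" for i j
    using Nil that by (auto simp: comp_def)
  have "Sset \<omega> [] \<eta> = {[]}" using z by (auto simp: Sset_def eta_Nil)
  thus ?case using z by (simp add: multinom_def comp_def)
next
  case (Cons b v)
  obtain j0 where j0: "j0 < CARD('a)" "\<omega> j0 = b" using om_surj by blast
  define dec where "dec i0 = (\<lambda>i j. if i = i0 \<and> j = j0 then \<eta> i j - 1 else \<eta> i j)" for i0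
  define T where "T i0 = (if \<eta> i0 j0 > 0 then Sset \<omega> v (dec i0) else {})" for i0
  have eS: "Sset \<omega> (b#v) \<eta> = (\<lambda>(i0,w). \<omega> i0 # w) ` (SIGMA i0:{..<CARD('a)}. T i0)"
  proof (intro equalityI subsetI)
    fix w assume w: "w \<in> Sset \<omega> (b#v) \<eta>"
    then obtain a w' where aw: "w = a # w'" by (cases w) (auto simp: Sset_def)
    obtain i0 where i0: "i0 < CARD('a)" "\<omega> i0 = a" using om_surj by blast
    have e: "eta \<omega> w' v i j + (if i = i0 \<and> j = j0 then 1 else 0) = \<eta> i j"
      if "i < CARD('a)" "j < CARD('a)" for i j
    proof -
      have h: "eta \<omega> (a#w') (b#v) i j = \<eta> i j" using w that aw by (simp add: Sset_def)
      have c: "(a = \<omega> i \<and> b = \<omega> j) = (i = i0 \<and> j = j0)"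
        using i0 j0 om_inj[OF that(1) i0(1)] om_inj[OF that(2) j0(1)] by auto
      show ?thesis using h c by (simp add: eta_Cons)
    qed
    have pos: "\<eta> i0 j0 > 0" using e[OF i0(1) j0(1)] by simp
    have e': "eta \<omega> w' v i j = dec i0 i j" if "i < CARD('a)" "j < CARD('a)" for i j
      using e[OF that] by (auto simp: dec_def)
    have "w' \<in> T i0" using e' pos w
      by (auto simp: T_def Sset_def aw)
    thus "w \<in> (\<lambda>(i0,w). \<omega> i0 # w) ` (SIGMA i0:{..<CARD('a)}. T i0)"
      using i0 aw by force
  next
    fix w assume "w \<in> (\<lambda>(i0,w). \<omega> i0 # w) ` (SIGMA i0:{..<CARD('a)}. T i0)"
    then obtain i0 w' where w: "w = \<omega> i0 # w'" "i0 < CARD('a)" "w' \<in> T i0" by auto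
    have pos: "\<eta> i0 j0 > 0" and w': "w' \<in> Sset \<omega> v (dec i0)"
      using w(3) by (auto simp: T_def split: if_splits)
    have "eta \<omega> w (b#v) i j = \<eta> i j" if "i < CARD('a)" "j < CARD('a)" for i j
    proof -
      have c: "(\<omega> i0 = \<omega> i \<and> b = \<omega> j) = (i = i0 \<and> j = j0)"
        using w(2) j0 om_inj[OF that(1) w(2)] om_inj[OF that(2) j0(1)] by auto
      have "eta \<omega> w' v i j = dec i0 i j" using w' that by (simp add: Sset_def)
      thus ?thesis using c pos by (simp add: w(1) eta_Cons dec_def)
    qed
    thus "w \<in> Sset \<omega> (b#v) \<eta>"
      using w' by (simp add: Sset_def w(1))
  qed
  have inj: "inj_on (\<lambda>(i0,w). \<omega> i0 # w) (SIGMA i0:{..<CARD('a)}. T i0)"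
    using om_inj by (auto simp: inj_on_def)
  have cardS: "card (Sset \<omega> (b#v) \<eta>) = (\<Sum>i0<CARD('a). card (T i0))"
    unfolding eS card_image[OF inj]
    by (rule card_SigmaI) (auto simp: T_def finite_Sset)
  let ?F = "\<lambda>j. multinom (comp \<omega> (b#v) j) CARD('a) (\<lambda>i. \<eta> i j)"
  let ?R = "\<Prod>j\<in>{..<CARD('a)}-{j0}. ?F j"
  have j0i: "j0 \<in> {..<CARD('a)}" using j0 by simp
  have cb: "comp \<omega> (b#v) j = comp \<omega> v j + (if j = j0 then 1 else 0)" if "j < CARD('a)" for j
    using that j0 om_inj[of j j0] by (auto simp: comp_Cons)
  have Tc: "real (card (T i0)) = (if \<eta> i0 j0 > 0 then
       multinom (comp \<omega> (b#v) j0 - 1) CARD('a) (\<lambda>i. if i = i0 then \<eta> i j0 - 1 else \<eta> i j0) * ?R else 0)"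
    if i0: "i0 < CARD('a)" for i0
  proof (cases "\<eta> i0 j0 > 0")
    case True
    have hyp: "\<forall>j<CARD('a). (\<Sum>i<CARD('a). dec i0 i j) = comp \<omega> v j"
    proof (intro allI impI)
      fix j assume j: "j < CARD('a)"
      have "(\<Sum>i<CARD('a). \<eta> i j) = (\<Sum>i<CARD('a). dec i0 i j + (if i = i0 \<and> j = j0 then 1 else 0))"
        using True by (intro sum.cong) (auto simp: dec_def)
      also have "\<dots> = (\<Sum>i<CARD('a). dec i0 i j) + (if j = j0 then 1 else 0)"
        using i0 by (simp add: sum.distrib)
      finally show "(\<Sum>i<CARD('a). dec i0 i j) = comp \<omega> v j"
        using Cons.prems j cb[OF j] by simp
    qed
    have "real (card (T i0)) = (\<Prod>j<CARD('a). multinom (comp \<omega> v j) CARD('a) (\<lambda>i. dec i0 i j))"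
      using Cons.IH[OF hyp] True by (simp add: T_def)
    also have "\<dots> = multinom (comp \<omega> v j0) CARD('a) (\<lambda>i. dec i0 i j0) *
        (\<Prod>j\<in>{..<CARD('a)}-{j0}. multinom (comp \<omega> v j) CARD('a) (\<lambda>i. dec i0 i j))"
      by (rule prod.remove[OF _ j0i]) simp
    also have "(\<Prod>j\<in>{..<CARD('a)}-{j0}. multinom (comp \<omega> v j) CARD('a) (\<lambda>i. dec i0 i j)) = ?R"
      by (intro prod.cong refl) (auto simp: cb dec_def)
    also have "multinom (comp \<omega> v j0) CARD('a) (\<lambda>i. dec i0 i j0) =
       multinom (comp \<omega> (b#v) j0 - 1) CARD('a) (\<lambda>i. if i = i0 then \<eta> i j0 - 1 else \<eta> i j0)"
      by (simp add: cb[OF j0(1)] dec_def)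
    finally show ?thesis using True by simp
  qed (simp add: T_def)
  have "real (card (Sset \<omega> (b#v) \<eta>)) = (\<Sum>i0<CARD('a). real (card (T i0)))"
    by (simp add: cardS)
  also have "\<dots> = (\<Sum>i0<CARD('a). if \<eta> i0 j0 > 0 then
       multinom (comp \<omega> (b#v) j0 - 1) CARD('a) (\<lambda>i. if i = i0 then \<eta> i j0 - 1 else \<eta> i j0) else 0) * ?R"
    unfolding sum_distrib_right by (intro sum.cong refl) (simp add: Tc)
  also have "\<dots> = ?F j0 * ?R"
    using multinom_sum[where c="comp \<omega> (b#v) j0" and m="CARD('a)" and b="\<lambda>i. \<eta> i j0"] Cons.prems j0 cb[OF j0(1)]
    by simp
  also have "\<dots> = (\<Prod>j<CARD('a). ?F j)"
    by (rule prod.remove[symmetric, OF _ j0i]) simp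
  finally show ?case .
qed

end



lemma perm_word_eq: "perm_word = permute_list"
  by (auto simp: fun_eq_iff perm_word_def permute_list_def)

lemma permute_list_inv:
  assumes "\<sigma> permutes {..<length u}"
  shows "permute_list (inv \<sigma>) (permute_list \<sigma> u) = u"
proof -
  have "permute_list (\<sigma> \<circ> inv \<sigma>) u = permute_list (inv \<sigma>) (permute_list \<sigma> u)"
    by (rule permute_list_compose[OF permutes_inv[OF assms]])
  thus ?thesis using permutes_inv_o(1)[OF assms] by simp
qed

lemma finite_bicomps: "finite (bicomps m n)"
proof -
  let ?f = "\<lambda>g i j. if i < m \<and> j < m then g (i,j) else (0::nat)"
  have "bicomps m n \<subseteq> ?f ` ({..<m}\<times>{..<m} \<rightarrow>\<^sub>E {..n})"
  proof
    fix \<eta> assume h: "\<eta> \<in> bicomps m n"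
    have le: "\<eta> i j \<le> n" if "i < m" "j < m" for i j
    proof -
      have "\<eta> i j \<le> (\<Sum>j<m. \<eta> i j)" using that by (intro member_le_sum) auto
      also have "\<dots> \<le> (\<Sum>i<m. \<Sum>j<m. \<eta> i j)"
        using that by (intro member_le_sum[where f="\<lambda>i. \<Sum>j<m. \<eta> i j"]) auto
      finally show ?thesis using h by (simp add: bicomps_def)
    qed
    have "\<eta> = ?f (restrict (\<lambda>(i,j). \<eta> i j) ({..<m}\<times>{..<m}))"
      using h by (auto simp: fun_eq_iff bicomps_def)
    moreover have "restrict (\<lambda>(i,j). \<eta> i j) ({..<m}\<times>{..<m}) \<in> {..<m}\<times>{..<m} \<rightarrow>\<^sub>E {..n}"
      using le by auto
    ultimately show "\<eta> \<in> ?f ` ({..<m}\<times>{..<m} \<rightarrow>\<^sub>E {..n})" by blast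
  qed
  moreover have "finite ({..<m}\<times>{..<m} \<rightarrow>\<^sub>E {..n})" by (intro finite_PiE) auto
  ultimately show ?thesis by (meson finite_imageI finite_subset)
qed

definition et :: "(nat \<Rightarrow> 'a::finite) \<Rightarrow> 'a list \<Rightarrow> 'a list \<Rightarrow> nat \<Rightarrow> nat \<Rightarrow> nat" where
  "et \<omega> w v = (\<lambda>i j. if i < CARD('a) \<and> j < CARD('a) then eta \<omega> w v i j else 0)"

definition T :: "'a::finite list \<Rightarrow> 'a list set" where
  "T u = {w. length w = length u \<and> mset w = mset u}"

lemma finite_T: "finite (T u)"
  by (rule finite_subset[OF _ finite_lists_length_eq[OF finite_class.finite_UNIV, of "length u"]]) (auto simp: T_def)

context
  fixes \<omega> :: "nat \<Rightarrow> 'a::{finite,zero}"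
  assumes ao: "alphabet_order \<omega>"
begin

lemma et_row: "(\<Sum>j<CARD('a). et \<omega> w v i j) = comp \<omega> w i"
proof (cases "i < CARD('a)")
  case True
  thus ?thesis using part2[OF ao, of "length w" "\<lambda>p. w ! p = \<omega> i" "\<lambda>p. v ! p"]
    by (simp add: et_def eta_def comp_def)
qed (simp add: et_def comp_def)

lemma et_col: "length v = length w \<Longrightarrow> (\<Sum>i<CARD('a). et \<omega> w v i j) = comp \<omega> v j"
proof (cases "j < CARD('a)")
  case True
  assume l: "length v = length w"
  thus ?thesis using True part[OF ao, of "length w" "\<lambda>p. w ! p" "\<lambda>p. v ! p = \<omega> j"]
    by (simp add: et_def eta_def comp_def)
qed (simp add: et_def comp_def)

lemma et_B: assumes "length w = n" shows "et \<omega> w v \<in> bicomps CARD('a) n"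
proof -
  have s: "(\<Sum>i<CARD('a). \<Sum>j<CARD('a). et \<omega> w v i j) = n"
    using et_row sum_comp[OF ao, of w] assms by simp
  show ?thesis unfolding bicomps_def mem_Collect_eq by (intro conjI s) (auto simp: et_def)
qed


lemma card_T: "real (card (T u)) = multinom (length u) CARD('a) (comp \<omega> u)"
proof -
  define n where "n = length u"
  define v0 where "v0 = replicate n (\<omega> 0)"
  define \<eta>0 where "\<eta>0 = (\<lambda>i (j::nat). if j = 0 then comp \<omega> u i else 0)"
  have Mpos: "0 < CARD('a)" by (rule Mpos[OF ao])
  have ev: "eta \<omega> w v0 i j = (if j = 0 then comp \<omega> w i else 0)"
    if "length w = n" "i < CARD('a)" "j < CARD('a)" for w i j
  proof -
    have "{p. p < length w \<and> w ! p = \<omega> i \<and> v0 ! p = \<omega> j} =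
          (if j = 0 then {p. p < length w \<and> w ! p = \<omega> i} else {})"
      using that om_inj[OF ao, of 0 j] Mpos by (auto simp: v0_def)
    thus ?thesis using that by (simp add: eta_def comp_def)
  qed
  have TS: "T u = Sset \<omega> v0 \<eta>0"
  proof -
    have "mset w = mset u \<longleftrightarrow> (\<forall>i<CARD('a). \<forall>j<CARD('a). eta \<omega> w v0 i j = \<eta>0 i j)"
      if "length w = n" for w
    proof -
      have "(\<forall>i<CARD('a). \<forall>j<CARD('a). eta \<omega> w v0 i j = \<eta>0 i j) \<longleftrightarrow> (\<forall>i<CARD('a). comp \<omega> w i = comp \<omega> u i)"
        using ev[OF that] Mpos by (auto simp: \<eta>0_def)
      also have "\<dots> \<longleftrightarrow> comp \<omega> w = comp \<omega> u"
        by (auto simp: fun_eq_iff comp_def)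
      also have "\<dots> \<longleftrightarrow> mset w = mset u" by (rule comp_eq_mset[OF ao])
      finally show ?thesis by simp
    qed
    thus ?thesis by (auto simp: T_def Sset_def v0_def n_def)
  qed
  have cv0: "comp \<omega> v0 j = (if j = 0 then n else 0)" if "j < CARD('a)" for j
  proof -
    have "{p. p < length v0 \<and> v0 ! p = \<omega> j} = (if j = 0 then {..<n} else {})"
      using that om_inj[OF ao, of 0 j] Mpos by (auto simp: v0_def)
    thus ?thesis using that by (simp add: comp_def)
  qed
  have hyp: "\<forall>j<CARD('a). (\<Sum>i<CARD('a). \<eta>0 i j) = comp \<omega> v0 j"
    using cv0 sum_comp[OF ao, of u] by (auto simp: \<eta>0_def n_def)
  have "real (card (T u)) = (\<Prod>j<CARD('a). multinom (comp \<omega> v0 j) CARD('a) (\<lambda>i. \<eta>0 i j))"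
    unfolding TS by (rule L1[OF ao hyp])
  also have "\<dots> = (\<Prod>j<CARD('a). if j = 0 then multinom n CARD('a) (comp \<omega> u) else 1)"
    by (intro prod.cong refl) (auto simp: cv0 \<eta>0_def multinom_def)
  also have "\<dots> = multinom n CARD('a) (comp \<omega> u)" using Mpos by (simp add: prod.delta)
  finally show ?thesis by (simp add: n_def)
qed

end



context
  fixes \<omega> :: "nat \<Rightarrow> 'a::{finite,zero}"
  assumes ao: "alphabet_order \<omega>"
begin

lemma fiber_card:
  assumes w: "w \<in> T u"
  shows "card {\<sigma>\<in>{\<sigma>. \<sigma> permutes {..<length u}}. permute_list \<sigma> u = w} =
         card {\<sigma>\<in>{\<sigma>. \<sigma> permutes {..<length u}}. permute_list \<sigma> u = u}"
    (is "card ?Fw = card ?Fu")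
proof -
  have "mset w = mset u" using w by (simp add: T_def)
  then obtain \<tau> where tau: "\<tau> permutes {..<length u}" "permute_list \<tau> u = w"
    by (rule mset_eq_permutation)
  have fin: "finite {\<sigma>. \<sigma> permutes {..<length u}}" by (rule finite_permutations) simp
  have "card ?Fu \<le> card ?Fw"
  proof (rule card_inj_on_le[where f="\<lambda>\<sigma>. \<sigma> \<circ> \<tau>"])
    show "inj_on (\<lambda>\<sigma>. \<sigma> \<circ> \<tau>) ?Fu"
    proof (rule inj_onI)
      fix a b assume "a \<circ> \<tau> = b \<circ> \<tau>"
      hence "a \<circ> \<tau> \<circ> inv \<tau> = b \<circ> \<tau> \<circ> inv \<tau>" by simp
      thus "a = b" using permutes_inv_o(1)[OF tau(1)] by (simp add: o_assoc[symmetric])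
    qed
    show "(\<lambda>\<sigma>. \<sigma> \<circ> \<tau>) ` ?Fu \<subseteq> ?Fw"
      using tau by (auto simp: permutes_compose permute_list_compose)
    show "finite ?Fw" using fin by simp
  qed
  moreover have "card ?Fw \<le> card ?Fu"
  proof (rule card_inj_on_le[where f="\<lambda>\<sigma>. \<sigma> \<circ> inv \<tau>"])
    show "inj_on (\<lambda>\<sigma>. \<sigma> \<circ> inv \<tau>) ?Fw"
    proof (rule inj_onI)
      fix a b assume "a \<circ> inv \<tau> = b \<circ> inv \<tau>"
      hence "a \<circ> inv \<tau> \<circ> \<tau> = b \<circ> inv \<tau> \<circ> \<tau>" by simp
      thus "a = b" using permutes_inv_o(2)[OF tau(1)] by (simp add: o_assoc[symmetric])
    qed
    show "(\<lambda>\<sigma>. \<sigma> \<circ> inv \<tau>) ` ?Fw \<subseteq> ?Fu"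
    proof
      fix r assume "r \<in> (\<lambda>\<sigma>. \<sigma> \<circ> inv \<tau>) ` ?Fw"
      then obtain \<rho> where rho: "\<rho> permutes {..<length u}" "permute_list \<rho> u = w" "r = \<rho> \<circ> inv \<tau>" by auto
      have "permute_list r u = permute_list (inv \<tau>) (permute_list \<rho> u)"
        unfolding rho(3) by (rule permute_list_compose[OF permutes_inv[OF tau(1)]])
      also have "\<dots> = u" using rho(2) tau permute_list_inv by metis
      finally show "r \<in> ?Fu" using rho permutes_inv[OF tau(1)] by (simp add: permutes_compose)
    qed
    show "finite ?Fu" using fin by simp
  qed
  ultimately show ?thesis by simp
qed

lemma fiber_sum:
  fixes h :: "'a list \<Rightarrow> real"
  shows "(\<Sum>\<sigma>\<in>{\<sigma>. \<sigma> permutes {..<length u}}. h (permute_list \<sigma> u)) =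
     real (card {\<sigma>\<in>{\<sigma>. \<sigma> permutes {..<length u}}. permute_list \<sigma> u = u}) * (\<Sum>w\<in>T u. h w)"
proof -
  let ?P = "{\<sigma>. \<sigma> permutes {..<length u}}"
  have fin: "finite ?P" by (rule finite_permutations) simp
  have "(\<Sum>\<sigma>\<in>?P. h (permute_list \<sigma> u)) =
        (\<Sum>w\<in>T u. \<Sum>\<sigma>\<in>{\<sigma>\<in>?P. permute_list \<sigma> u = w}. h (permute_list \<sigma> u))"
    by (rule sum.group[symmetric, OF fin finite_T]) (auto simp: T_def)
  also have "\<dots> = (\<Sum>w\<in>T u. real (card {\<sigma>\<in>?P. permute_list \<sigma> u = u}) * h w)"
  proof (intro sum.cong refl)
    fix w assume w: "w \<in> T u"
    have "(\<Sum>\<sigma>\<in>{\<sigma>\<in>?P. permute_list \<sigma> u = w}. h (permute_list \<sigma> u)) =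
          (\<Sum>\<sigma>\<in>{\<sigma>\<in>?P. permute_list \<sigma> u = w}. h w)" by (intro sum.cong) auto
    also have "\<dots> = real (card {\<sigma>\<in>?P. permute_list \<sigma> u = w}) * h w" by simp
    finally show "(\<Sum>\<sigma>\<in>{\<sigma>\<in>?P. permute_list \<sigma> u = w}. h (permute_list \<sigma> u)) =
       real (card {\<sigma>\<in>?P. permute_list \<sigma> u = u}) * h w"
      using fiber_card[OF w] by simp
  qed
  finally show ?thesis by (simp add: sum_distrib_left)
qed

lemma keyK:
  assumes lu: "length u = n" and lv: "length v = n" and B: "\<eta> \<in> bicomps CARD('a) n"
  shows "(\<Sum>\<sigma>\<in>{\<sigma>. \<sigma> permutes {0..<n}}. if et \<omega> (perm_word \<sigma> u) v = \<eta> then 1 else 0) / fact n =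
    (if comp \<omega> u = (\<lambda>i. \<Sum>j<CARD('a). \<eta> i j) \<and> comp \<omega> v = (\<lambda>i. \<Sum>j<CARD('a). \<eta> j i) then
      (\<Prod>i<CARD('a). multinom ((\<lambda>i. \<Sum>j<CARD('a). \<eta> j i) i) CARD('a) (\<lambda>j. \<eta> j i))
        / multinom n CARD('a) (\<lambda>i. \<Sum>j<CARD('a). \<eta> i j) else (0::real))"
proof -
  let ?P = "{\<sigma>. \<sigma> permutes {..<length u}}"
  let ?f0 = "real (card {\<sigma>\<in>?P. permute_list \<sigma> u = u})"
  let ?S = "{w\<in>T u. et \<omega> w v = \<eta>}"
  have Pe: "{\<sigma>. \<sigma> permutes {0..<n}} = ?P" using lu by (simp add: atLeast0LessThan)
  have "(\<Sum>\<sigma>\<in>{\<sigma>. \<sigma> permutes {0..<n}}. if et \<omega> (perm_word \<sigma> u) v = \<eta> then 1 else 0) =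
        ?f0 * (\<Sum>w\<in>T u. if et \<omega> w v = \<eta> then 1 else (0::real))"
    unfolding Pe perm_word_eq by (rule fiber_sum)
  also have "(\<Sum>w\<in>T u. if et \<omega> w v = \<eta> then 1 else (0::real)) = real (card ?S)"
    by (simp add: sum.inter_filter[OF finite_T, symmetric])
  finally have L: "(\<Sum>\<sigma>\<in>{\<sigma>. \<sigma> permutes {0..<n}}. if et \<omega> (perm_word \<sigma> u) v = \<eta> then 1 else 0) =
        ?f0 * real (card ?S)" .
  have fn: "fact n = ?f0 * real (card (T u))"
  proof -
    have "fact n = real (card ?P)" using card_permutations[of "{..<length u}" n] lu by simp
    also have "real (card ?P) = (\<Sum>\<sigma>\<in>?P. (\<lambda>_. 1::real) (permute_list \<sigma> u))"
      by (simp only: real_of_card)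
    also have "\<dots> = ?f0 * (\<Sum>w\<in>T u. (\<lambda>_. 1::real) w)" by (rule fiber_sum)
    also have "(\<Sum>w\<in>T u. (\<lambda>_. 1::real) w) = real (card (T u))" by (simp only: real_of_card)
    finally show ?thesis .
  qed
  have rowS: "comp \<omega> w = (\<lambda>i. \<Sum>j<CARD('a). \<eta> i j)" if "w \<in> ?S" for w
  proof -
    have e: "et \<omega> w v = \<eta>" using that by simp
    show ?thesis
    proof
      fix i show "comp \<omega> w i = (\<Sum>j<CARD('a). \<eta> i j)" using et_row[OF ao, of w v i] unfolding e by simp
    qed
  qed
  have colS: "comp \<omega> v = (\<lambda>i. \<Sum>j<CARD('a). \<eta> j i)" if "w \<in> ?S" for w
  proof -
    have e: "et \<omega> w v = \<eta>" using that by simp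
    have l: "length v = length w" using that lu lv unfolding T_def by (auto dest: mset_eq_length)
    show ?thesis
    proof
      fix i show "comp \<omega> v i = (\<Sum>j<CARD('a). \<eta> j i)" using et_col[OF ao l, of i] unfolding e by simp
    qed
  qed
  have Tm: "comp \<omega> w = comp \<omega> u" if "w \<in> T u" for w
  proof -
    have "mset w = mset u" using that by (simp add: T_def)
    thus ?thesis using comp_eq_mset[OF ao, of w u] by simp
  qed
  show ?thesis
  proof (cases "comp \<omega> u = (\<lambda>i. \<Sum>j<CARD('a). \<eta> i j) \<and> comp \<omega> v = (\<lambda>i. \<Sum>j<CARD('a). \<eta> j i)")
    case False
    have Se: "?S = {}"
    proof (rule ccontr)
      assume "?S \<noteq> {}"
      then obtain w where w: "w \<in> ?S" by blast
      have A: "comp \<omega> u = (\<lambda>i. \<Sum>j<CARD('a). \<eta> i j)" using Tm[of w] rowS[OF w] w by simp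
      show False by (rule notE[OF False conjI[OF A colS[OF w]]])
    qed
    have "real (card ?S) = 0" unfolding Se by simp
    thus ?thesis unfolding L if_not_P[OF False] by simp
  next
    case True
    have SS: "?S = Sset \<omega> v \<eta>"
    proof (intro equalityI subsetI)
      fix w assume w: "w \<in> ?S"
      have e: "et \<omega> w v = \<eta>" using w by simp
      have l: "length w = length v" using w lu lv unfolding T_def by (auto dest: mset_eq_length)
      have "eta \<omega> w v i j = \<eta> i j" if "i < CARD('a)" "j < CARD('a)" for i j
        using fun_cong[OF fun_cong[OF e, of i], of j] that by (simp add: et_def)
      thus "w \<in> Sset \<omega> v \<eta>" using l by (simp add: Sset_def)
    next
      fix w assume w: "w \<in> Sset \<omega> v \<eta>"
      have e: "et \<omega> w v = \<eta>"
      proof (intro ext)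
        fix i j
        show "et \<omega> w v i j = \<eta> i j"
        proof (cases "i < CARD('a) \<and> j < CARD('a)")
          case True thus ?thesis using w by (simp add: Sset_def et_def)
        next
          case False thus ?thesis using B by (auto simp: et_def bicomps_def)
        qed
      qed
      have "comp \<omega> w = comp \<omega> u"
      proof
        fix i show "comp \<omega> w i = comp \<omega> u i" using et_row[OF ao, of w v i] True unfolding e by simp
      qed
      hence "mset w = mset u" using comp_eq_mset[OF ao] by blast
      moreover have "length w = length u" using w lu lv by (simp add: Sset_def)
      ultimately show "w \<in> ?S" using e by (simp add: T_def)
    qed
    have cv: "comp \<omega> v j = (\<Sum>i<CARD('a). \<eta> i j)" for j using True by simp
    have hyp: "\<forall>j<CARD('a). (\<Sum>i<CARD('a). \<eta> i j) = comp \<omega> v j" using cv by simp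
    have cS: "real (card ?S) = (\<Prod>j<CARD('a). multinom ((\<lambda>i. \<Sum>j<CARD('a). \<eta> j i) j) CARD('a) (\<lambda>i. \<eta> i j))"
      unfolding SS L1[OF ao hyp] cv by simp
    have cT: "real (card (T u)) = multinom n CARD('a) (\<lambda>i. \<Sum>j<CARD('a). \<eta> i j)"
      using card_T[OF ao, of u] True lu by simp
    have f0: "?f0 \<noteq> 0"
    proof -
      have "id \<in> {\<sigma>\<in>?P. permute_list \<sigma> u = u}" by (simp add: permutes_id)
      moreover have "finite {\<sigma>\<in>?P. permute_list \<sigma> u = u}" using finite_permutations[of "{..<length u}"] by simp
      ultimately have "card {\<sigma>\<in>?P. permute_list \<sigma> u = u} > 0" using card_gt_0_iff by blast
      thus ?thesis by simp
    qed
    have "(\<Sum>\<sigma>\<in>{\<sigma>. \<sigma> permutes {0..<n}}. if et \<omega> (perm_word \<sigma> u) v = \<eta> then 1 else 0) / fact n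
       = (?f0 * real (card ?S)) / (?f0 * real (card (T u)))" unfolding L fn ..
    also have "\<dots> = real (card ?S) / real (card (T u))" using f0 by (rule mult_divide_mult_cancel_left)
    finally show ?thesis unfolding if_P[OF True] cS cT .
  qed
qed

end



lemma sum_delta_ind:
  fixes f :: "'b \<Rightarrow> real"
  assumes "finite B" "a \<in> B"
  shows "(\<Sum>\<eta>\<in>B. (if a = \<eta> then 1 else 0) * f \<eta>) = f a"
proof -
  have "(\<Sum>\<eta>\<in>B. (if a = \<eta> then 1 else 0) * f \<eta>) = (\<Sum>\<eta>\<in>B. if a = \<eta> then f \<eta> else 0)"
    by (intro sum.cong) auto
  also have "\<dots> = f a" using assms by (simp add: sum.delta)
  finally show ?thesis .
qed

lemma double_count:
  fixes c :: real
  assumes "finite C" "finite D"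
  shows "(\<Sum>u\<in>C. \<Sum>v\<in>D. (if P u \<and> Q v then c else 0) * y) =
         real (card {u\<in>C. P u}) * real (card {v\<in>D. Q v}) * c * y"
proof -
  have "(\<Sum>u\<in>C. \<Sum>v\<in>D. (if P u \<and> Q v then c else 0) * y) =
        (\<Sum>u\<in>C. \<Sum>v\<in>D. (if P u then 1 else 0) * ((if Q v then 1 else 0) * (c * y)))"
    by (intro sum.cong refl) auto
  also have "\<dots> = (\<Sum>u\<in>C. (if P u then 1 else 0)) * (\<Sum>v\<in>D. (if Q v then 1 else 0)) * (c * y)"
    by (simp only: sum_distrib_left[symmetric] sum_distrib_right[symmetric] mult.assoc)
  also have "(\<Sum>u\<in>C. (if P u then 1 else (0::real))) = real (card {u\<in>C. P u})"
    using assms by (simp add: sum.inter_filter[symmetric])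
  also have "(\<Sum>v\<in>D. (if Q v then 1 else (0::real))) = real (card {v\<in>D. Q v})"
    using assms by (simp add: sum.inter_filter[symmetric])
  finally show ?thesis by (simp add: mult.assoc)
qed

theorem theorem3p1:
  fixes \<omega> :: "nat \<Rightarrow> 'a::{finite,comm_ring_1}"
    and n :: nat and C D :: "'a list set" and x :: "nat \<Rightarrow> nat \<Rightarrow> real"
  assumes "is_Fq_or_Zk TYPE('a)"
    and "alphabet_order \<omega>"
    and "linear_code n C" and "linear_code n D"
  shows "CJ_av \<omega> n C D x =
    (\<Sum>\<eta>\<in>bicomps (card (UNIV :: 'a set)) n.
       (let r = (\<lambda>i. \<Sum>j<card (UNIV :: 'a set). \<eta> i j); s = (\<lambda>i. \<Sum>j<card (UNIV :: 'a set). \<eta> j i) in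
        real (A_count \<omega> C r) * real (A_count \<omega> D s) *
        ((\<Prod>i<card (UNIV :: 'a set). multinom (s i) (card (UNIV :: 'a set)) (\<lambda>j. \<eta> j i)) / multinom n (card (UNIV :: 'a set)) r) *
        (\<Prod>i<card (UNIV :: 'a set). \<Prod>j<card (UNIV :: 'a set). x i j ^ \<eta> i j)))"
proof -
  note ao = assms(2)
  let ?m = "CARD('a)"
  let ?B = "bicomps ?m n"
  let ?P = "{\<sigma>. \<sigma> permutes {0..<n}}"
  define X where "X \<eta> = (\<Prod>i<?m. \<Prod>j<?m. x i j ^ \<eta> i j)" for \<eta> :: "nat \<Rightarrow> nat \<Rightarrow> nat"
  define I where "I \<sigma> u v \<eta> = (if et \<omega> (perm_word \<sigma> u) v = \<eta> then 1 else (0::real))" for \<sigma> u v \<eta>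
  define coef where "coef \<eta> = (\<Prod>i<?m. multinom ((\<lambda>i. \<Sum>j<?m. \<eta> j i) i) ?m (\<lambda>j. \<eta> j i))
        / multinom n ?m (\<lambda>i. \<Sum>j<?m. \<eta> i j)" for \<eta> :: "nat \<Rightarrow> nat \<Rightarrow> nat"
  have lC: "length u = n" if "u \<in> C" for u using assms(3) that by (auto simp: linear_code_def)
  have lD: "length v = n" if "v \<in> D" for v using assms(4) that by (auto simp: linear_code_def)
  have fC: "finite C"
    by (rule finite_subset[OF _ finite_lists_length_eq[OF finite_class.finite_UNIV, of n]]) (auto simp: lC)
  have fD: "finite D"
    by (rule finite_subset[OF _ finite_lists_length_eq[OF finite_class.finite_UNIV, of n]]) (auto simp: lD)
  have fB: "finite ?B" by (rule finite_bicomps)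
  have fP: "finite ?P" by (rule finite_permutations) simp
  have stepA: "CJE \<omega> (perm_word \<sigma> ` C) D x = (\<Sum>u\<in>C. \<Sum>v\<in>D. \<Sum>\<eta>\<in>?B. I \<sigma> u v \<eta> * X \<eta>)"
    if s: "\<sigma> \<in> ?P" for \<sigma>
  proof -
    have inj: "inj_on (perm_word \<sigma>) C"
    proof (rule inj_onI)
      fix a b assume a: "a \<in> C" and b: "b \<in> C" and e: "perm_word \<sigma> a = perm_word \<sigma> b"
      have sa: "\<sigma> permutes {..<length a}" using s lC[OF a] by (simp add: atLeast0LessThan)
      have sb: "\<sigma> permutes {..<length b}" using s lC[OF b] by (simp add: atLeast0LessThan)
      have "a = permute_list (inv \<sigma>) (permute_list \<sigma> a)" using permute_list_inv[OF sa] by simp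
      also have "\<dots> = permute_list (inv \<sigma>) (permute_list \<sigma> b)" using e by (simp add: perm_word_eq)
      also have "\<dots> = b" using permute_list_inv[OF sb] by simp
      finally show "a = b" .
    qed
    have "CJE \<omega> (perm_word \<sigma> ` C) D x = (\<Sum>u\<in>C. \<Sum>v\<in>D. X (et \<omega> (perm_word \<sigma> u) v))"
      unfolding CJE_def sum.reindex[OF inj] o_def X_def
      by (intro sum.cong refl prod.cong) (auto simp: et_def)
    also have "\<dots> = (\<Sum>u\<in>C. \<Sum>v\<in>D. \<Sum>\<eta>\<in>?B. I \<sigma> u v \<eta> * X \<eta>)"
    proof (intro sum.cong refl)
      fix u v assume u: "u \<in> C" and v: "v \<in> D"
      have l: "length (perm_word \<sigma> u) = n" using lC[OF u] by (simp add: perm_word_eq)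
      show "X (et \<omega> (perm_word \<sigma> u) v) = (\<Sum>\<eta>\<in>?B. I \<sigma> u v \<eta> * X \<eta>)"
        unfolding I_def by (rule sum_delta_ind[symmetric, OF fB et_B[OF ao l]])
    qed
    finally show ?thesis .
  qed
  have "CJ_av \<omega> n C D x = 1 / fact n * (\<Sum>\<sigma>\<in>?P. \<Sum>u\<in>C. \<Sum>v\<in>D. \<Sum>\<eta>\<in>?B. I \<sigma> u v \<eta> * X \<eta>)"
    unfolding CJ_av_def by (simp add: stepA)
  also have "(\<Sum>\<sigma>\<in>?P. \<Sum>u\<in>C. \<Sum>v\<in>D. \<Sum>\<eta>\<in>?B. I \<sigma> u v \<eta> * X \<eta>) =
             (\<Sum>u\<in>C. \<Sum>\<sigma>\<in>?P. \<Sum>v\<in>D. \<Sum>\<eta>\<in>?B. I \<sigma> u v \<eta> * X \<eta>)"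
    by (rule sum.swap)
  also have "\<dots> = (\<Sum>u\<in>C. \<Sum>v\<in>D. \<Sum>\<sigma>\<in>?P. \<Sum>\<eta>\<in>?B. I \<sigma> u v \<eta> * X \<eta>)"
    by (rule sum.cong[OF refl], rule sum.swap)
  also have "\<dots> = (\<Sum>u\<in>C. \<Sum>v\<in>D. \<Sum>\<eta>\<in>?B. \<Sum>\<sigma>\<in>?P. I \<sigma> u v \<eta> * X \<eta>)"
    by (rule sum.cong[OF refl], rule sum.cong[OF refl], rule sum.swap)
  also have "\<dots> = (\<Sum>u\<in>C. \<Sum>\<eta>\<in>?B. \<Sum>v\<in>D. \<Sum>\<sigma>\<in>?P. I \<sigma> u v \<eta> * X \<eta>)"
    by (rule sum.cong[OF refl], rule sum.swap)
  also have "\<dots> = (\<Sum>\<eta>\<in>?B. \<Sum>u\<in>C. \<Sum>v\<in>D. \<Sum>\<sigma>\<in>?P. I \<sigma> u v \<eta> * X \<eta>)"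
    by (rule sum.swap)
  finally have L1: "CJ_av \<omega> n C D x =
      (\<Sum>\<eta>\<in>?B. \<Sum>u\<in>C. \<Sum>v\<in>D. ((\<Sum>\<sigma>\<in>?P. I \<sigma> u v \<eta>) / fact n) * X \<eta>)"
    by (simp add: sum_distrib_left sum_distrib_right sum_divide_distrib)
  also have "\<dots> = (\<Sum>\<eta>\<in>?B. \<Sum>u\<in>C. \<Sum>v\<in>D.
      (if comp \<omega> u = (\<lambda>i. \<Sum>j<?m. \<eta> i j) \<and> comp \<omega> v = (\<lambda>i. \<Sum>j<?m. \<eta> j i) then coef \<eta> else 0) * X \<eta>)"
  proof (intro sum.cong refl)
    fix \<eta> u v assume e: "\<eta> \<in> ?B" and u: "u \<in> C" and v: "v \<in> D"
    show "((\<Sum>\<sigma>\<in>?P. I \<sigma> u v \<eta>) / fact n) * X \<eta> =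
      (if comp \<omega> u = (\<lambda>i. \<Sum>j<?m. \<eta> i j) \<and> comp \<omega> v = (\<lambda>i. \<Sum>j<?m. \<eta> j i) then coef \<eta> else 0) * X \<eta>"
      unfolding I_def coef_def keyK[OF ao lC[OF u] lD[OF v] e] ..
  qed
  also have "\<dots> = (\<Sum>\<eta>\<in>?B. real (card {u\<in>C. comp \<omega> u = (\<lambda>i. \<Sum>j<?m. \<eta> i j)}) *
       real (card {v\<in>D. comp \<omega> v = (\<lambda>i. \<Sum>j<?m. \<eta> j i)}) * coef \<eta> * X \<eta>)"
    by (intro sum.cong refl double_count fC fD)
  finally show ?thesis
    by (simp add: Let_def A_count_def coef_def X_def)
qed


end
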